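(* Let $\mathbf p$ be an arbitrary pure strategy profile, with associated numbers $(u_i,v_i)_{i\in[m]}$. Let $i^*\in\arg\min_{i\in[m]}\{u_i+v_i\bar q\}$, and for $i\neq j$ let $x_{ij}\in\{0,1\}$ equal $1$ if and only if at least one user selects IP $(s_i,s_j,d)$. Then $\mathbf p$ is a Nash equilibrium if and only if both of the following hold: (i) for all $i\in[m]$ with $u_i>0$: $\bar q(u_i+v_i\bar q)\le u_{i^*}+v_{i^*}\bar q+\bar q+\frac{q\mu}{\phi}$; (ii) for all $i,l\in[m]$ with $x_{il}=1$: $u_l+v_l\bar q\le \min\left\{\bar q(u_i+1+v_i\bar q)-\frac{q\mu}{\phi},\ u_{i^*}+v_{i^*}\bar q+\bar q\right\}$.
   Context: Network model: there are $m\ge 2$ source nodes $s_1,\dots,s_m$ and one destination $d$. Source $s_i$ has a set $N_i$ of $n_i$ users. Each user generates an independent Poisson flow of packets of rate $\phi>0$; each direct link $(s_i,d)$ has service rate $\mu>0$; each sidelink $(s_i,s_j)$ loses packets independently with probability $q\in[0,1]$, and $\bar q=1-q$. Only pure strategies are considered: a user in $N_i$ chooses either the direct path (DP) $(s_i,d)$ or an indirect path (IP) $(s_i,s_j,d)$ for some $j\neq i$. For a pure profile $\mathbf p$, $u_i$ is the number of users of $N_i$ choosing DP and $v_i$ is the number of users of other sources choosing an IP $(s_j,s_i,d)$, $j\neq i$; $T_i=u_i\phi+v_i\bar q\phi$. The loss rate of a user $k\in N_i$ is $LR_k=\phi\frac{T_i}{T_i+\mu}$ if it uses DP, and $LR_k=\phi\left(q+\bar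 q\frac{T_j}{T_j+\mu}\right)$ if it uses IP $(s_i,s_j,d)$ (here $T_i,T_j$ include the user's own traffic). A Nash equilibrium is a pure profile in which no user can strictly decrease its loss rate by unilaterally switching to another route, all other users' routes being fixed. *)

theory Defs
  imports Complex_Main
begin

text \<open>Sources are indexed by 0..<m. Users of source i are indexed by k < n i.
A pure profile p assigns to user k of source i a relay index p i k < m:
p i k = i means the direct path (s_i,d); p i k = j with j \<noteq> i means the
indirect path (s_i,s_j,d).\<close>

definition valid_profile :: "nat \<Rightarrow> (nat \<Rightarrow> nat) \<Rightarrow> (nat \<Rightarrow> nat \<Rightarrow> nat) \<Rightarrow> bool" where
  "valid_profile m n p \<longleftrightarrow> (\<forall>i<m. \<forall>k<n i. p i k < m)"

definition u_num :: "(nat \<Rightarrow> nat) \<Rightarrow> (nat \<Rightarrow> nat \<Rightarrow> nat) \<Rightarrow> nat \<Rightarrow> nat" where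
  "u_num n p i = card {k. k < n i \<and> p i k = i}"

definition v_num :: "nat \<Rightarrow> (nat \<Rightarrow> nat) \<Rightarrow> (nat \<Rightarrow> nat \<Rightarrow> nat) \<Rightarrow> nat \<Rightarrow> nat" where
  "v_num m n p i = card {(j, k). j < m \<and> j \<noteq> i \<and> k < n j \<and> p j k = i}"

definition traffic :: "nat \<Rightarrow> (nat \<Rightarrow> nat) \<Rightarrow> real \<Rightarrow> real \<Rightarrow> (nat \<Rightarrow> nat \<Rightarrow> nat) \<Rightarrow> nat \<Rightarrow> real" where
  "traffic m n \<phi> q p i = real (u_num n p i) * \<phi> + real (v_num m n p i) * (1 - q) * \<phi>"

definition loss_rate :: "nat \<Rightarrow> (nat \<Rightarrow> nat) \<Rightarrow> real \<Rightarrow> real \<Rightarrow> real \<Rightarrow> (nat \<Rightarrow> nat \<Rightarrow> nat) \<Rightarrow> nat \<Rightarrow> nat \<Rightarrow> real" where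
  "loss_rate m n \<phi> \<mu> q p i k =
     (let j = p i k; T = traffic m n \<phi> q p j in
      if j = i then \<phi> * (T / (T + \<mu>))
      else \<phi> * (q + (1 - q) * (T / (T + \<mu>))))"

definition deviate :: "(nat \<Rightarrow> nat \<Rightarrow> nat) \<Rightarrow> nat \<Rightarrow> nat \<Rightarrow> nat \<Rightarrow> (nat \<Rightarrow> nat \<Rightarrow> nat)" where
  "deviate p i k r = p(i := (p i)(k := r))"

definition nash_eq :: "nat \<Rightarrow> (nat \<Rightarrow> nat) \<Rightarrow> real \<Rightarrow> real \<Rightarrow> real \<Rightarrow> (nat \<Rightarrow> nat \<Rightarrow> nat) \<Rightarrow> bool" where
  "nash_eq m n \<phi> \<mu> q p \<longleftrightarrow>
     (\<forall>i<m. \<forall>k<n i. \<forall>r<m.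
        loss_rate m n \<phi> \<mu> q p i k \<le> loss_rate m n \<phi> \<mu> q (deviate p i k r) i k)"

definition uses_ip :: "(nat \<Rightarrow> nat) \<Rightarrow> (nat \<Rightarrow> nat \<Rightarrow> nat) \<Rightarrow> nat \<Rightarrow> nat \<Rightarrow> bool" where
  "uses_ip n p i l \<longleftrightarrow> i \<noteq> l \<and> (\<exists>k<n i. p i k = l)"

end

theory Submission imports Defs begin

lemma fin_u: "finite {k. k < (n::nat\<Rightarrow>nat) i \<and> P k}" by (rule finite_subset[of _ "{..<n i}"]) auto
lemma fin_v: "finite {(j, k). j < (m::nat) \<and> j \<noteq> i \<and> k < (n::nat\<Rightarrow>nat) j \<and> P j k}"
  by (rule finite_subset[of _ "SIGMA j:{..<m}. {..<n j}"]) (auto intro: finite_SigmaI)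

lemma u_dev:
  assumes "k < n i0" "p i0 k \<noteq> r"
  shows "u_num n (deviate p i0 k r) r = u_num n p r + (if r = i0 then 1 else 0)"
proof (cases "r = i0")
  case True
  have "{k'. k' < n r \<and> deviate p i0 k r r k' = r} = insert k {k'. k' < n r \<and> p r k' = r}"
    using True assms by (auto simp: deviate_def)
  moreover have "k \<notin> {k'. k' < n r \<and> p r k' = r}" using True assms by auto
  ultimately show ?thesis using True by (simp add: u_num_def)
next
  case False
  then show ?thesis by (simp add: u_num_def deviate_def)
qed

lemma v_dev:
  assumes "k < n i0" "p i0 k \<noteq> r" "i0 < m"
  shows "v_num m n (deviate p i0 k r) r = v_num m n p r + (if r = i0 then 0 else 1)"
proof (cases "r = i0")
  case True
  have "{(j, k'). j < m \<and> j \<noteq> r \<and> k' < n j \<and> deviate p i0 k r j k' = r}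
     = {(j, k'). j < m \<and> j \<noteq> r \<and> k' < n j \<and> p j k' = r}"
    using True by (auto simp: deviate_def)
  then show ?thesis using True by (simp add: v_num_def)
next
  case False
  have "{(j, k'). j < m \<and> j \<noteq> r \<and> k' < n j \<and> deviate p i0 k r j k' = r}
     = insert (i0,k) {(j, k'). j < m \<and> j \<noteq> r \<and> k' < n j \<and> p j k' = r}"
    using False assms by (auto simp: deviate_def split: if_splits)
  moreover have "(i0,k) \<notin> {(j, k'). j < m \<and> j \<noteq> r \<and> k' < n j \<and> p j k' = r}" using assms by auto
  ultimately show ?thesis using False fin_v[of m r n "\<lambda>j k'. p j k' = r"] by (simp add: v_num_def)
qed

lemma scale_iff:
  fixes A B C D k :: real
  assumes "k > 0" "B - A = k*(D - C)"
  shows "A \<le> B \<longleftrightarrow> C \<le> D"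
proof -
  have "A \<le> B \<longleftrightarrow> 0 \<le> B - A" by simp
  also have "\<dots> \<longleftrightarrow> 0 \<le> k*(D - C)" using assms by simp
  also have "\<dots> \<longleftrightarrow> 0 \<le> D - C" using assms by (simp add: zero_le_mult_iff)
  finally show ?thesis by simp
qed

lemma L1:
  fixes s t \<phi> \<mu> q :: real
  assumes "s \<ge> 0" "t \<ge> 0" "\<phi> > 0" "\<mu> > 0" "q \<le> 1"
  shows "\<phi>*((\<phi>*s)/(\<phi>*s+\<mu>)) \<le> \<phi>*(q + (1-q)*((\<phi>*t)/(\<phi>*t+\<mu>))) \<longleftrightarrow> (1-q)*s \<le> t + q*\<mu>/\<phi>"
proof -
  have p1: "\<phi>*s+\<mu> > 0" "\<phi>*t+\<mu> > 0" using assms by (auto intro: add_nonneg_pos)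
  have "\<phi>*((\<phi>*s)/(\<phi>*s+\<mu>)) \<le> \<phi>*(q + (1-q)*((\<phi>*t)/(\<phi>*t+\<mu>))) \<longleftrightarrow> (1-q)*(\<phi>*s) \<le> \<phi>*t + q*\<mu>"
  proof (rule scale_iff)
    show "\<phi>*\<mu>/((\<phi>*s+\<mu>)*(\<phi>*t+\<mu>)) > 0" using p1 assms by simp
    show "\<phi>*(q + (1-q)*((\<phi>*t)/(\<phi>*t+\<mu>))) - \<phi>*((\<phi>*s)/(\<phi>*s+\<mu>))
       = \<phi>*\<mu>/((\<phi>*s+\<mu>)*(\<phi>*t+\<mu>)) * ((\<phi>*t + q*\<mu>) - (1-q)*(\<phi>*s))"
      using p1 assms by (simp add: field_simps less_imp_neq[symmetric])
  qed
  also have "\<dots> \<longleftrightarrow> (1-q)*s \<le> t + q*\<mu>/\<phi>"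
    by (rule scale_iff[where k=\<phi>]) (use assms in \<open>auto simp: field_simps\<close>)
  finally show ?thesis .
qed

lemma L2:
  fixes s t \<phi> \<mu> q :: real
  assumes "s \<ge> 0" "t \<ge> 0" "\<phi> > 0" "\<mu> > 0" "q \<le> 1"
  shows "\<phi>*(q + (1-q)*((\<phi>*s)/(\<phi>*s+\<mu>))) \<le> \<phi>*((\<phi>*t)/(\<phi>*t+\<mu>)) \<longleftrightarrow> s \<le> (1-q)*t - q*\<mu>/\<phi>"
proof -
  have p1: "\<phi>*s+\<mu> > 0" "\<phi>*t+\<mu> > 0" using assms by (auto intro: add_nonneg_pos)
  have "\<phi>*(q + (1-q)*((\<phi>*s)/(\<phi>*s+\<mu>))) \<le> \<phi>*((\<phi>*t)/(\<phi>*t+\<mu>)) \<longleftrightarrow> \<phi>*s \<le> (1-q)*(\<phi>*t) - q*\<mu>"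
  proof (rule scale_iff)
    show "\<phi>*\<mu>/((\<phi>*s+\<mu>)*(\<phi>*t+\<mu>)) > 0" using p1 assms by simp
    show "\<phi>*((\<phi>*t)/(\<phi>*t+\<mu>)) - \<phi>*(q + (1-q)*((\<phi>*s)/(\<phi>*s+\<mu>)))
       = \<phi>*\<mu>/((\<phi>*s+\<mu>)*(\<phi>*t+\<mu>)) * (((1-q)*(\<phi>*t) - q*\<mu>) - \<phi>*s)"
      using p1 assms by (simp add: field_simps less_imp_neq[symmetric])
  qed
  also have "\<dots> \<longleftrightarrow> s \<le> (1-q)*t - q*\<mu>/\<phi>"
    by (rule scale_iff[where k=\<phi>]) (use assms in \<open>auto simp: field_simps\<close>)
  finally show ?thesis .
qed

lemma L3:
  fixes s t \<phi> \<mu> q :: real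
  assumes "s \<ge> 0" "t \<ge> 0" "\<phi> > 0" "\<mu> > 0" "q < 1"
  shows "\<phi>*(q + (1-q)*((\<phi>*s)/(\<phi>*s+\<mu>))) \<le> \<phi>*(q + (1-q)*((\<phi>*t)/(\<phi>*t+\<mu>))) \<longleftrightarrow> s \<le> t"
proof (rule scale_iff)
  have p1: "\<phi>*s+\<mu> > 0" "\<phi>*t+\<mu> > 0" using assms by (auto intro: add_nonneg_pos)
  show "(1-q)*\<phi>*\<phi>*\<mu>/((\<phi>*s+\<mu>)*(\<phi>*t+\<mu>)) > 0" using p1 assms by simp
  show "\<phi>*(q + (1-q)*((\<phi>*t)/(\<phi>*t+\<mu>))) - \<phi>*(q + (1-q)*((\<phi>*s)/(\<phi>*s+\<mu>)))
     = (1-q)*\<phi>*\<phi>*\<mu>/((\<phi>*s+\<mu>)*(\<phi>*t+\<mu>)) * (t - s)"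
    using p1 assms by (simp add: field_simps less_imp_neq[symmetric])
qed


definition SS :: "nat \<Rightarrow> (nat \<Rightarrow> nat) \<Rightarrow> real \<Rightarrow> (nat \<Rightarrow> nat \<Rightarrow> nat) \<Rightarrow> nat \<Rightarrow> real" where
  "SS m n q p j = real (u_num n p j) + real (v_num m n p j) * (1 - q)"

lemma LR: "loss_rate m n \<phi> \<mu> q p i k =
  (if p i k = i then \<phi>*((\<phi>*SS m n q p (p i k))/(\<phi>*SS m n q p (p i k)+\<mu>))
   else \<phi>*(q+(1-q)*((\<phi>*SS m n q p (p i k))/(\<phi>*SS m n q p (p i k)+\<mu>))))"
proof -
  have "traffic m n \<phi> q p j = \<phi> * SS m n q p j" for j
    by (simp add: traffic_def SS_def algebra_simps)
  then show ?thesis by (simp add: loss_rate_def Let_def)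
qed

lemma SS_dev: "i < m \<Longrightarrow> k < n i \<Longrightarrow> p i k \<noteq> r \<Longrightarrow>
  SS m n q (deviate p i k r) r = SS m n q p r + (if r = i then 1 else 1 - q)"
  by (simp add: SS_def u_dev v_dev algebra_simps)

lemma dev_same: "deviate p i k (p i k) = p"
  by (simp add: deviate_def)

lemma dev_at: "deviate p i k r i k = r"
  by (simp add: deviate_def)

theorem theorem2:
  fixes m :: nat and n :: "nat \<Rightarrow> nat" and p :: "nat \<Rightarrow> nat \<Rightarrow> nat"
    and \<phi> \<mu> q :: real and istar :: nat
  assumes "m \<ge> 2" and "\<phi> > 0" and "\<mu> > 0" and "0 \<le> q" and "q \<le> 1"
    and "valid_profile m n p"
    and "istar < m"
    and "\<forall>i<m. real (u_num n p istar) + real (v_num m n p istar) * (1 - q)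
                \<le> real (u_num n p i) + real (v_num m n p i) * (1 - q)"
  shows "nash_eq m n \<phi> \<mu> q p \<longleftrightarrow>
    ((\<forall>i<m. u_num n p i > 0 \<longrightarrow>
        (1 - q) * (real (u_num n p i) + real (v_num m n p i) * (1 - q))
          \<le> real (u_num n p istar) + real (v_num m n p istar) * (1 - q) + (1 - q) + q * \<mu> / \<phi>)
     \<and> (\<forall>i<m. \<forall>l<m. uses_ip n p i l \<longrightarrow>
        real (u_num n p l) + real (v_num m n p l) * (1 - q)
          \<le> min ((1 - q) * (real (u_num n p i) + 1 + real (v_num m n p i) * (1 - q)) - q * \<mu> / \<phi>)
                 (real (u_num n p istar) + real (v_num m n p istar) * (1 - q) + (1 - q))))"
proof -
  let ?S = "SS m n q p"
  have q0: "0 \<le> q" and q1: "q \<le> 1" and ph: "\<phi> > 0" and mu: "\<mu> > 0" using assms by auto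
  have Sdef: "\<And>j. real (u_num n p j) + real (v_num m n p j) * (1 - q) = ?S j" by (simp add: SS_def)
  have Sdef1: "\<And>j. real (u_num n p j) + 1 + real (v_num m n p j) * (1 - q) = ?S j + 1" by (simp add: SS_def)
  have Snn: "\<And>p' j. SS m n q p' j \<ge> 0" using q1 by (simp add: SS_def)
  have smin: "\<And>i. i<m \<Longrightarrow> ?S istar \<le> ?S i" using assms(8) by (simp add: Sdef)
  have qmp: "q*\<mu>/\<phi> \<ge> 0" using q0 mu ph by simp
  show ?thesis unfolding Sdef Sdef1
  proof
    assume NE: "nash_eq m n \<phi> \<mu> q p"
    have dev: "\<And>i k r. i<m \<Longrightarrow> k<n i \<Longrightarrow> r<m \<Longrightarrow>
      loss_rate m n \<phi> \<mu> q p i k \<le> loss_rate m n \<phi> \<mu> q (deviate p i k r) i k"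
      using NE unfolding nash_eq_def by blast
    show "(\<forall>i<m. 0 < u_num n p i \<longrightarrow> (1 - q) * ?S i \<le> ?S istar + (1 - q) + q * \<mu> / \<phi>) \<and>
          (\<forall>i<m. \<forall>l<m. uses_ip n p i l \<longrightarrow> ?S l \<le> min ((1 - q) * (?S i + 1) - q * \<mu> / \<phi>) (?S istar + (1 - q)))"
    proof (intro conjI allI impI)
      fix i assume i: "i<m" "0 < u_num n p i"
      have "{k. k<n i \<and> p i k = i} \<noteq> {}" using i by (auto simp: u_num_def simp del: Collect_empty_eq)
      then obtain k where k: "k < n i" "p i k = i" by auto
      show "(1-q) * ?S i \<le> ?S istar + (1-q) + q*\<mu>/\<phi>"
      proof (cases "istar = i")
        case True
        have "q * ?S i \<ge> 0" using q0 Snn by simp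
        then show ?thesis using True q1 qmp by (simp add: algebra_simps)
      next
        case False
        have "loss_rate m n \<phi> \<mu> q p i k \<le> loss_rate m n \<phi> \<mu> q (deviate p i k istar) i k"
          using dev[OF i(1) k(1) assms(7)] .
        then have "\<phi>*((\<phi>*?S i)/(\<phi>*?S i+\<mu>)) \<le> \<phi>*(q+(1-q)*((\<phi>*(?S istar + (1-q)))/(\<phi>*(?S istar + (1-q))+\<mu>)))"
          using False k i by (simp add: LR dev_at SS_dev)
        then show ?thesis using L1[OF Snn _ ph mu q1, of "?S istar + (1-q)"] Snn[of p istar] q1
          by (simp add: algebra_simps)
      qed
    next
      fix i l assume il: "i<m" "l<m" "uses_ip n p i l"
      then obtain k where k: "k<n i" "p i k = l" "i \<noteq> l" by (auto simp: uses_ip_def)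
      have "loss_rate m n \<phi> \<mu> q p i k \<le> loss_rate m n \<phi> \<mu> q (deviate p i k i) i k"
        using dev[OF il(1) k(1) il(1)] .
      then have "\<phi>*(q+(1-q)*((\<phi>*?S l)/(\<phi>*?S l+\<mu>))) \<le> \<phi>*((\<phi>*(?S i + 1))/(\<phi>*(?S i + 1)+\<mu>))"
        using k il by (simp add: LR dev_at SS_dev)
      then have A: "?S l \<le> (1-q)*(?S i + 1) - q*\<mu>/\<phi>"
        using L2[OF Snn _ ph mu q1, of "?S i + 1"] Snn[of p i] by simp
      have B: "?S l \<le> ?S istar + (1-q)"
      proof (cases "istar = l \<or> istar = i")
        case True
        have "q * ?S i \<ge> 0" using q0 Snn by simp
        then show ?thesis using True A q1 qmp by (auto simp: algebra_simps)
      next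
        case False
        show ?thesis
        proof (cases "q = 1")
          case True
          have "\<mu>/\<phi> > 0" using mu ph by simp
          then show ?thesis using True A Snn[of p l] by simp
        next
          case False': False
          then have q1': "q < 1" using q1 by simp
          have "loss_rate m n \<phi> \<mu> q p i k \<le> loss_rate m n \<phi> \<mu> q (deviate p i k istar) i k"
            using dev[OF il(1) k(1) assms(7)] .
          then have "\<phi>*(q+(1-q)*((\<phi>*?S l)/(\<phi>*?S l+\<mu>))) \<le> \<phi>*(q+(1-q)*((\<phi>*(?S istar + (1-q)))/(\<phi>*(?S istar + (1-q))+\<mu>)))"
            using k il False by (simp add: LR dev_at SS_dev)
          then show ?thesis using L3[OF Snn _ ph mu q1', of "?S istar + (1-q)"] Snn[of p istar] q1 by simp
        qed
      qed
      show "?S l \<le> min ((1 - q) * (?S i + 1) - q * \<mu> / \<phi>) (?S istar + (1 - q))"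
        using A B by simp
    qed
  next
    assume C: "(\<forall>i<m. 0 < u_num n p i \<longrightarrow> (1 - q) * ?S i \<le> ?S istar + (1 - q) + q * \<mu> / \<phi>) \<and>
          (\<forall>i<m. \<forall>l<m. uses_ip n p i l \<longrightarrow> ?S l \<le> min ((1 - q) * (?S i + 1) - q * \<mu> / \<phi>) (?S istar + (1 - q)))"
    show "nash_eq m n \<phi> \<mu> q p" unfolding nash_eq_def
    proof (intro allI impI)
      fix i k r assume ikr: "i<m" "k<n i" "r<m"
      show "loss_rate m n \<phi> \<mu> q p i k \<le> loss_rate m n \<phi> \<mu> q (deviate p i k r) i k"
      proof (cases "r = p i k")
        case True
        then show ?thesis by (simp add: dev_same)
      next
        case False
        define a where "a = p i k"
        have am: "a < m" using assms(6) ikr unfolding valid_profile_def a_def by blast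
        show ?thesis
        proof (cases "a = i")
          case True
          have "k \<in> {k. k<n i \<and> p i k = i}" using True ikr a_def by auto
          then have "u_num n p i > 0" unfolding u_num_def
            by (metis card_gt_0_iff empty_iff fin_u)
          then have "(1 - q) * ?S i \<le> ?S istar + (1 - q) + q * \<mu> / \<phi>" using C ikr by blast
          then have "(1 - q) * ?S i \<le> (?S r + (1 - q)) + q * \<mu> / \<phi>" using smin[OF ikr(3)] by simp
          then have "\<phi>*((\<phi>*?S i)/(\<phi>*?S i+\<mu>)) \<le> \<phi>*(q+(1-q)*((\<phi>*(?S r + (1-q)))/(\<phi>*(?S r + (1-q))+\<mu>)))"
            using L1[OF Snn _ ph mu q1, of "?S r + (1-q)"] Snn[of p r] q1 by simp
          then show ?thesis using True False ikr a_def by (simp add: LR dev_at SS_dev)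
        next
          case ai: False
          have ip: "uses_ip n p i a" using ai ikr a_def by (auto simp: uses_ip_def)
          have AB: "?S a \<le> min ((1 - q) * (?S i + 1) - q * \<mu> / \<phi>) (?S istar + (1 - q))"
            using C ip ikr am by blast
          show ?thesis
          proof (cases "r = i")
            case True
            have "\<phi>*(q+(1-q)*((\<phi>*?S a)/(\<phi>*?S a+\<mu>))) \<le> \<phi>*((\<phi>*(?S i + 1))/(\<phi>*(?S i + 1)+\<mu>))"
              using L2[OF Snn _ ph mu q1, of "?S i + 1"] Snn[of p i] AB by simp
            then show ?thesis using True False ai ikr a_def by (simp add: LR dev_at SS_dev)
          next
            case ri: False
            show ?thesis
            proof (cases "q = 1")
              case True
              then show ?thesis using ri ai a_def by (simp add: LR dev_at)
            next
              case False': False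
              then have q1': "q < 1" using q1 by simp
              have "?S a \<le> ?S r + (1-q)" using AB smin[OF ikr(3)] by simp
              then have "\<phi>*(q+(1-q)*((\<phi>*?S a)/(\<phi>*?S a+\<mu>))) \<le> \<phi>*(q+(1-q)*((\<phi>*(?S r + (1-q)))/(\<phi>*(?S r + (1-q))+\<mu>)))"
                using L3[OF Snn _ ph mu q1', of "?S r + (1-q)"] Snn[of p r] q1 by simp
              then show ?thesis using ri False ai ikr a_def by (simp add: LR dev_at SS_dev)
            qed
          qed
        qed
      qed
    qed
  qed
qed

end
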